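(* Let $K$ be a field, $c\in K\setminus\{0\}$, $n\ge1$, and let $f$ be a $c$-frieze of order $n$ over $K$. For every even $k$ with $-1\le k\le n+2$, the sequence $(f(i,i+k-1))_{i\in\mathbb{Z}}$ (row $k$) is periodic with (least) period a divisor of $n+3$. If $n$ is even, then for every odd $k$ with $-1\le k\le n+2$, row $k$ is periodic with (least) period a divisor of $2n+6$.
   Context: The $c$-continuant polynomials $P_k=P_k^c$ ($k\ge-1$) are defined by $P_{-1}=0$, $P_0=1$, and for $k\ge1$, $P_k(x_1,\dots,x_k)=x_kP_{k-1}(x_1,\dots,x_{k-1})+cP_{k-2}(x_1,\dots,x_{k-2})$. A family $(x_i)_{i\in\mathbb{Z}}$ in $K$ is $n$-admissible if $P_{n+2}(x_i,\dots,x_{i+n+1})=0$ for all $i$. Let $\mathbb{B}_n=\{(i,j)\in\mathbb{Z}^2:-2\le j-i\le n+1\}$. A $c$-frieze of order $n$ is a function $f:\mathbb{B}_n\to K$ for which there is an $n$-admissible family $(x_i)$ with $f(i,j)=P_{j-i+1}(x_i,\dots,x_j)$ for all $(i,j)\in\mathbb{B}_n$. Row $k$ of $f$ is the sequence $(f(i,i+k-1))_{i\in\mathbb{Z}}$; it is periodic of period $p$ if $f(i+p,i+k-1+p)=f(i,i+k-1)$ for all $i$ and $p$ is the least positive integer with this property. *)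

theory Defs
  imports Main
begin

text \<open>c-continuant polynomials. cont c x k = P_k(x 1, ..., x k) for k \<ge> 0,
  with P_0 = 1, P_1 = x_1 * P_0 + c * P_{-1} = x_1 (P_{-1} = 0), and
  P_k = x_k P_{k-1} + c P_{k-2}.\<close>
fun cont :: "'a::field \<Rightarrow> (nat \<Rightarrow> 'a) \<Rightarrow> nat \<Rightarrow> 'a" where
  "cont c x 0 = 1"
| "cont c x (Suc 0) = x 1 * 1 + c * 0"
| "cont c x (Suc (Suc k)) = x (Suc (Suc k)) * cont c x (Suc k) + c * cont c x k"

definition Pc :: "'a::field \<Rightarrow> int \<Rightarrow> (nat \<Rightarrow> 'a) \<Rightarrow> 'a" where
  "Pc c k x = (if k < 0 then 0 else cont c x (nat k))"

definition Pfam :: "'a::field \<Rightarrow> int \<Rightarrow> (int \<Rightarrow> 'a) \<Rightarrow> int \<Rightarrow> 'a" where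
  "Pfam c k x i = Pc c k (\<lambda>m. x (i + int m - 1))"

definition admissible :: "'a::field \<Rightarrow> nat \<Rightarrow> (int \<Rightarrow> 'a) \<Rightarrow> bool" where
  "admissible c n x \<longleftrightarrow> (\<forall>i. Pfam c (int n + 2) x i = 0)"

definition frieze_domain :: "nat \<Rightarrow> (int \<times> int) set" where
  "frieze_domain n = {(i, j). -2 \<le> j - i \<and> j - i \<le> int n + 1}"

text \<open>A c-frieze of order n; values outside the domain B_n are irrelevant.\<close>
definition is_frieze :: "'a::field \<Rightarrow> nat \<Rightarrow> (int \<times> int \<Rightarrow> 'a) \<Rightarrow> bool" where
  "is_frieze c n f \<longleftrightarrow> (\<exists>x. admissible c n x \<and>
     (\<forall>(i, j) \<in> frieze_domain n. f (i, j) = Pfam c (j - i + 1) x i))"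

definition frieze_row :: "(int \<times> int \<Rightarrow> 'a) \<Rightarrow> int \<Rightarrow> int \<Rightarrow> 'a" where
  "frieze_row f k i = f (i, i + k - 1)"

definition has_period :: "(int \<Rightarrow> 'a) \<Rightarrow> nat \<Rightarrow> bool" where
  "has_period r p \<longleftrightarrow> (\<forall>i. r (i + int p) = r i)"

definition least_period :: "(int \<Rightarrow> 'a) \<Rightarrow> nat \<Rightarrow> bool" where
  "least_period r p \<longleftrightarrow> p > 0 \<and> has_period r p \<and> (\<forall>q. 0 < q \<and> q < p \<longrightarrow> \<not> has_period r q)"

end

theory Submission
  imports Defs
begin

definition qq :: "'a::field \<Rightarrow> (int \<Rightarrow> 'a) \<Rightarrow> int \<Rightarrow> nat \<Rightarrow> 'a" where
  "qq c x i t = cont c (\<lambda>m. x (i + int m - 1)) t"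

lemma qq0: "qq c x i 0 = 1" by (simp add: qq_def)
lemma qq1: "qq c x i (Suc 0) = x i" by (simp add: qq_def)
lemma qqS: "qq c x i (Suc (Suc t)) = x (i + int t + 1) * qq c x i (Suc t) + c * qq c x i t"
  by (simp add: qq_def algebra_simps)

lemma qq_back_aux:
  "\<forall>i. qq c x i (Suc (Suc t)) = x i * qq c x (i+1) (Suc t) + c * qq c x (i+2) t
     \<and> qq c x i (Suc (Suc (Suc t))) = x i * qq c x (i+1) (Suc (Suc t)) + c * qq c x (i+2) (Suc t)"
proof (induction t)
  case 0
  show ?case
  proof
    fix i
    have a: "qq c x i (Suc (Suc 0)) = x (i+1) * x i + c" using qqS[of c x i 0] by (simp add: qq0 qq1)
    have b: "qq c x (i+1) (Suc (Suc 0)) = x (i+2) * x (i+1) + c"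
      using qqS[of c x "i+1" 0] by (simp add: qq0 qq1 add.assoc)
    have d: "qq c x i (Suc (Suc (Suc 0))) = x (i+2) * qq c x i (Suc (Suc 0)) + c * x i"
      using qqS[of c x i 1] by (simp add: qq1 add.assoc)
    show "qq c x i (Suc (Suc 0)) = x i * qq c x (i+1) (Suc 0) + c * qq c x (i+2) 0
     \<and> qq c x i (Suc (Suc (Suc 0))) = x i * qq c x (i+1) (Suc (Suc 0)) + c * qq c x (i+2) (Suc 0)"
      using a b d by (simp add: qq0 qq1 algebra_simps)
  qed
next
  case (Suc t)
  show ?case
  proof
    fix i
    have IH1: "qq c x i (Suc (Suc t)) = x i * qq c x (i+1) (Suc t) + c * qq c x (i+2) t"
      using Suc by blast
    have IH2: "qq c x i (Suc (Suc (Suc t))) = x i * qq c x (i+1) (Suc (Suc t)) + c * qq c x (i+2) (Suc t)"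
      using Suc by blast
    have e1: "qq c x i (Suc (Suc (Suc (Suc t)))) = x (i + int t + 3) * qq c x i (Suc (Suc (Suc t))) + c * qq c x i (Suc (Suc t))"
      using qqS[of c x i "Suc (Suc t)"] by (simp add: algebra_simps)
    have e2: "qq c x (i+1) (Suc (Suc (Suc t))) = x (i + int t + 3) * qq c x (i+1) (Suc (Suc t)) + c * qq c x (i+1) (Suc t)"
      using qqS[of c x "i+1" "Suc t"] by (simp add: algebra_simps)
    have e3: "qq c x (i+2) (Suc (Suc t)) = x (i + int t + 3) * qq c x (i+2) (Suc t) + c * qq c x (i+2) t"
      using qqS[of c x "i+2" "t"] by (simp add: algebra_simps)
    show "qq c x i (Suc (Suc (Suc t))) = x i * qq c x (i+1) (Suc (Suc t)) + c * qq c x (i+2) (Suc t)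
     \<and> qq c x i (Suc (Suc (Suc (Suc t)))) = x i * qq c x (i+1) (Suc (Suc (Suc t))) + c * qq c x (i+2) (Suc (Suc t))"
      apply (rule conjI[OF IH2])
      apply (simp only: e1 e2 e3 IH1 IH2)
      by (simp add: algebra_simps)
  qed
qed

lemma qq_back: "qq c x i (Suc (Suc t)) = x i * qq c x (i+1) (Suc t) + c * qq c x (i+2) t"
  using qq_back_aux by blast

lemma glide:
  assumes adm: "\<And>i. qq c x i (n+2) = 0"
  shows "t + d = n + 1 \<Longrightarrow> qq c x i t * (-c)^d = qq c x i (n+1) * qq c x (i + int t + 1) d"
proof (induction d arbitrary: t rule: less_induct)
  case (less d)
  show ?case
  proof (cases d)
    case 0 then show ?thesis using less.prems by (simp add: qq0)
  next
    case (Suc e)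
    show ?thesis
    proof (cases e)
      case 0
      have tn: "t = n" using less.prems Suc 0 by simp
      have "qq c x i (Suc (Suc n)) = 0" using adm[of i] by simp
      then have "x (i + int n + 1) * qq c x i (Suc n) + c * qq c x i n = 0" by (simp add: qqS)
      then show ?thesis using tn Suc 0 by (simp add: qq1 neg_eq_iff_add_eq_0 algebra_simps)
    next
      case (Suc e')
      have d: "d = Suc (Suc e')" using \<open>d = Suc e\<close> Suc by simp
      have I1: "qq c x i (Suc t) * (-c)^(Suc e') = qq c x i (n+1) * qq c x (i + int t + 2) (Suc e')"
        using less.IH[of "Suc e'" "Suc t"] less.prems d by (simp add: algebra_simps)
      have I2: "qq c x i (Suc (Suc t)) * (-c)^e' = qq c x i (n+1) * qq c x (i + int t + 3) e'"
        using less.IH[of "e'" "Suc (Suc t)"] less.prems d by (simp add: algebra_simps)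
      have B: "qq c x (i + int t + 1) (Suc (Suc e')) = x (i + int t + 1) * qq c x (i + int t + 2) (Suc e') + c * qq c x (i + int t + 3) e'"
        using qq_back[of c x "i + int t + 1" e'] by (simp add: algebra_simps)
      have F: "qq c x i (Suc (Suc t)) = x (i + int t + 1) * qq c x i (Suc t) + c * qq c x i t"
        by (rule qqS)
      have "qq c x i (n+1) * qq c x (i + int t + 1) d
          = x (i + int t + 1) * (qq c x i (n+1) * qq c x (i + int t + 2) (Suc e')) + c * (qq c x i (n+1) * qq c x (i + int t + 3) e')"
        using B d by (simp add: algebra_simps)
      also have "\<dots> = x (i + int t + 1) * (qq c x i (Suc t) * (-c)^(Suc e')) + c * (qq c x i (Suc (Suc t)) * (-c)^e')"
        using I1 I2 by simp
      also have "\<dots> = qq c x i t * (-c)^d"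
        using F d by (simp add: algebra_simps)
      finally show ?thesis by simp
    qed
  qed
qed


context
  fixes c :: "'a::field" and x :: "int \<Rightarrow> 'a" and n :: nat
  assumes adm: "\<And>i. qq c x i (n+2) = 0" and c0: "c \<noteq> 0"
begin

lemma rr: "qq c x i (n+1) * qq c x (i+1) (n+1) = (-c)^(n+1)"
  using glide[OF adm, of 0 "n+1" i] by (simp add: qq0)

lemma rnz: "qq c x i (n+1) \<noteq> 0"
  using rr[of i] c0 by auto

lemma r2: "qq c x (i+2) (n+1) = qq c x i (n+1)"
proof -
  have "qq c x i (n+1) * qq c x (i+1) (n+1) = qq c x (i+1) (n+1) * qq c x (i+2) (n+1)"
    using rr[of i] rr[of "i+1"] by (simp add: add.assoc)
  then show ?thesis using rnz[of "i+1"] by (simp add: mult.commute)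
qed

lemma r2t: "qq c x (i + 2 * int t) (n+1) = qq c x i (n+1)"
proof (induction t)
  case 0 then show ?case by simp
next
  case (Suc t)
  have "qq c x (i + 2 * int (Suc t)) (n+1) = qq c x ((i + 2 * int t) + 2) (n+1)"
    by (simp add: algebra_simps)
  also have "\<dots> = qq c x (i + 2 * int t) (n+1)" by (rule r2)
  finally show ?case using Suc by simp
qed

lemma twice: assumes "k \<le> n+1"
  shows "qq c x i k * (-c)^(n+1) = qq c x i (n+1) * qq c x (i + int k + 1) (n+1) * qq c x (i + int n + 3) k"
proof -
  have g1: "qq c x i k * (-c)^(n+1-k) = qq c x i (n+1) * qq c x (i + int k + 1) (n+1-k)"
    using glide[OF adm, of k "n+1-k" i] assms by simp
  have g2: "qq c x (i + int k + 1) (n+1-k) * (-c)^k = qq c x (i + int k + 1) (n+1) * qq c x (i + int n + 3) k"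
    using glide[OF adm, of "n+1-k" k "i + int k + 1"] assms by (simp add: of_nat_diff algebra_simps)
  have "(-c)^(n+1) = (-c)^(n+1-k) * (-c)^k" using assms by (simp add: power_add[symmetric])
  then have "qq c x i k * (-c)^(n+1) = qq c x i k * (-c)^(n+1-k) * (-c)^k" by simp
  also have "\<dots> = qq c x i (n+1) * (qq c x (i + int k + 1) (n+1-k) * (-c)^k)" using g1 by simp
  also have "\<dots> = qq c x i (n+1) * qq c x (i + int k + 1) (n+1) * qq c x (i + int n + 3) k"
    using g2 by simp
  finally show ?thesis .
qed

lemma even_row: assumes "k \<le> n+1" "even k"
  shows "qq c x (i + int n + 3) k = qq c x i k"
proof -
  obtain t where t: "k = 2*t" using assms(2) evenE by blast
  have ix: "i + int k + 1 = (i+1) + 2 * int t" using t by simp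
  have "qq c x (i + int k + 1) (n+1) = qq c x (i+1) (n+1)"
    unfolding ix by (rule r2t)
  then have "qq c x i k * (-c)^(n+1) = (-c)^(n+1) * qq c x (i + int n + 3) k"
    using twice[OF assms(1), of i] rr[of i] by simp
  then show ?thesis using c0 by (simp add: mult.commute)
qed

lemma odd_row: assumes "k \<le> n+1" "odd k"
  shows "qq c x i k * (-c)^(n+1) = qq c x i (n+1) ^ 2 * qq c x (i + int n + 3) k"
proof -
  obtain t where t: "k = 2*t + 1" using assms(2) oddE by blast
  have ix: "i + int k + 1 = i + 2 * int (t+1)" using t by simp
  have "qq c x (i + int k + 1) (n+1) = qq c x i (n+1)"
    unfolding ix by (rule r2t)
  then show ?thesis using twice[OF assms(1), of i] by (simp add: power2_eq_square)
qed

lemma odd_row2: assumes "k \<le> n+1" "odd k" "even n"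
  shows "qq c x (i + 2 * int n + 6) k = qq c x i k"
proof -
  obtain t where t: "n = 2*t" using assms(3) evenE by blast
  have ix: "i + int n + 3 = (i+1) + 2 * int (t+1)" using t by simp
  have r3: "qq c x (i + int n + 3) (n+1) = qq c x (i+1) (n+1)"
    unfolding ix by (rule r2t)
  have e1: "qq c x i k * (-c)^(n+1) = qq c x i (n+1) ^ 2 * qq c x (i + int n + 3) k"
    by (rule odd_row[OF assms(1,2)])
  have e2: "qq c x (i + int n + 3) k * (-c)^(n+1) = qq c x (i + int n + 3) (n+1) ^ 2 * qq c x (i + 2 * int n + 6) k"
    using odd_row[OF assms(1,2), of "i + int n + 3"] by (simp add: algebra_simps)
  have "qq c x i k * (-c)^(n+1) * (-c)^(n+1) = qq c x i (n+1) ^ 2 * (qq c x (i + int n + 3) k * (-c)^(n+1))"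
    using e1 by simp
  also have "\<dots> = (qq c x i (n+1) * qq c x (i+1) (n+1))^2 * qq c x (i + 2 * int n + 6) k"
    using e2 r3 by (simp add: power_mult_distrib)
  also have "\<dots> = (-c)^(n+1) * (-c)^(n+1) * qq c x (i + 2 * int n + 6) k"
    using rr[of i] by (simp add: power2_eq_square)
  finally show ?thesis using c0 by simp
qed

end

lemma period_mult: "has_period r p \<Longrightarrow> has_period r (p * t)"
proof (induction t)
  case 0 then show ?case by (simp add: has_period_def)
next
  case (Suc t)
  then show ?case unfolding has_period_def
    by (metis add.assoc mult_Suc_right of_nat_add)
qed

lemma least_exists:
  assumes "has_period r N" "N > 0"
  shows "\<exists>p. least_period r p \<and> p dvd N"
proof -
  define p where "p = (LEAST p. 0 < p \<and> has_period r p)"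
  have P: "0 < p \<and> has_period r p" unfolding p_def
    by (rule LeastI[of _ N]) (use assms in simp)
  have L: "\<And>q. 0 < q \<and> q < p \<Longrightarrow> \<not> has_period r q"
    unfolding p_def using not_less_Least by blast
  have "has_period r (N mod p)" unfolding has_period_def
  proof
    fix i
    have "r (i + int (N mod p)) = r (i + int (N mod p) + int (p * (N div p)))"
      using period_mult[of r p "N div p"] P unfolding has_period_def by simp
    also have "\<dots> = r (i + int N)"
      by (metis add.assoc mod_mult_div_eq of_nat_add)
    also have "\<dots> = r i" using assms(1) unfolding has_period_def by simp
    finally show "r (i + int (N mod p)) = r i" .
  qed
  then have "N mod p = 0" using L[of "N mod p"] P by (metis mod_less_divisor neq0_conv)
  then show ?thesis using P L unfolding least_period_def by (auto simp: mod_eq_0_iff_dvd)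
qed


lemma row_val:
  assumes fx: "\<forall>(i, j) \<in> frieze_domain n. f (i, j) = Pfam c (j - i + 1) x i"
    and k: "-1 \<le> k" "k \<le> int n + 2"
  shows "frieze_row f k i = (if k < 0 then 0 else qq c x i (nat k))"
proof -
  have "(i, i + k - 1) \<in> frieze_domain n" using k by (simp add: frieze_domain_def)
  then have "frieze_row f k i = Pfam c k x i" using fx unfolding frieze_row_def by auto
  then show ?thesis by (simp add: Pfam_def Pc_def qq_def)
qed

theorem mainTheorem11:
  fixes c :: "'a::field" and n :: nat and f :: "int \<times> int \<Rightarrow> 'a"
  assumes "c \<noteq> 0" and "n \<ge> 1" and "is_frieze c n f"
  shows "(\<forall>k. even k \<and> -1 \<le> k \<and> k \<le> int n + 2 \<longrightarrow>
            (\<exists>p. least_period (frieze_row f k) p \<and> p dvd n + 3))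
       \<and> (even n \<longrightarrow> (\<forall>k. odd k \<and> -1 \<le> k \<and> k \<le> int n + 2 \<longrightarrow>
            (\<exists>p. least_period (frieze_row f k) p \<and> p dvd 2 * n + 6)))"
proof -
  obtain x where ad: "admissible c n x"
    and fx: "\<forall>(i, j) \<in> frieze_domain n. f (i, j) = Pfam c (j - i + 1) x i"
    using assms(3) unfolding is_frieze_def by blast
  have adm: "\<And>i. qq c x i (n+2) = 0"
  proof -
    fix i
    have "Pfam c (int n + 2) x i = 0" using ad unfolding admissible_def by blast
    then have "cont c (\<lambda>m. x (i + int m - 1)) (nat (int n + 2)) = 0"
      by (simp add: Pfam_def Pc_def)
    moreover have "nat (int n + 2) = n + 2" by simp
    ultimately show "qq c x i (n+2) = 0" by (simp add: qq_def)
  qed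
  have zero: "frieze_row f k i = 0" if "k = -1 \<or> k = int n + 2" for k i
    using row_val[OF fx, of k i] that adm[of i]
    by (auto simp: nat_add_distrib)
  have P1: "\<exists>p. least_period (frieze_row f k) p \<and> p dvd n + 3"
    if k: "even k" "-1 \<le> k" "k \<le> int n + 2" for k
  proof (rule least_exists)
    show "has_period (frieze_row f k) (n + 3)" unfolding has_period_def
    proof
      fix i
      show "frieze_row f k (i + int (n + 3)) = frieze_row f k i"
      proof (cases "k = -1 \<or> k = int n + 2")
        case True then show ?thesis using zero by simp
      next
        case False
        then have k0: "0 \<le> k" "k \<le> int n + 1" using k by auto
        have ev: "even (nat k)" using k0 k(1) by (simp add: even_nat_iff)
        have kn: "nat k \<le> n + 1" using k0 by linarith
        have "frieze_row f k (i + int (n + 3)) = qq c x (i + int n + 3) (nat k)"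
          using row_val[OF fx, of k] k0 by (simp add: add.assoc)
        also have "\<dots> = qq c x i (nat k)" by (rule even_row[OF adm assms(1) kn ev])
        also have "\<dots> = frieze_row f k i" using row_val[OF fx, of k] k0 by simp
        finally show ?thesis .
      qed
    qed
  qed simp
  have P2: "\<exists>p. least_period (frieze_row f k) p \<and> p dvd 2 * n + 6"
    if k: "odd k" "-1 \<le> k" "k \<le> int n + 2" and en: "even n" for k
  proof (rule least_exists)
    show "has_period (frieze_row f k) (2 * n + 6)" unfolding has_period_def
    proof
      fix i
      show "frieze_row f k (i + int (2 * n + 6)) = frieze_row f k i"
      proof (cases "k = -1 \<or> k = int n + 2")
        case True then show ?thesis using zero by simp
      next
        case False
        then have k0: "0 \<le> k" "k \<le> int n + 1" using k by auto
        have ev: "odd (nat k)" using k0 k(1) by (simp add: even_nat_iff)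
        have kn: "nat k \<le> n + 1" using k0 by linarith
        have "frieze_row f k (i + int (2 * n + 6)) = qq c x (i + 2 * int n + 6) (nat k)"
          using row_val[OF fx, of k] k0 by (simp add: add.assoc)
        also have "\<dots> = qq c x i (nat k)" by (rule odd_row2[OF adm assms(1) kn ev en])
        also have "\<dots> = frieze_row f k i" using row_val[OF fx, of k] k0 by simp
        finally show ?thesis .
      qed
    qed
  qed simp
  show ?thesis using P1 P2 by blast
qed

end
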